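(* For each infinite matrix $A=(A(i,j))_{i,j\in\mathbb{N}}$ with entries in $\{0,1\}$ and without identically zero rows, there exists an $A_\infty$-branching system on the measure space $([0,\infty),\mu)$, where $\mu$ is Lebesgue measure.
   Context: Notation: for measurable $Y,Z\subseteq X$, write $Y\stackrel{\mu\text{-a.e.}}{=}Z$ if $\mu(Y\setminus Z)=0=\mu(Z\setminus Y)$. For a measurable map $h$ on a measurable set $W$, $\mu\circ h$ is the measure $E\mapsto\mu(h(E))$ on $W$. For finite $U,V\subseteq\mathbb{N}$ and $j\in\mathbb{N}$ put $A(U,V,j)=\prod_{u\in U}A(u,j)\prod_{v\in V}(1-A(v,j))$. A transformation $F$ is nonsingular if $\mu(F^{-1}(E))=0$ whenever $\mu(E)=0$. An $A_\infty$-branching system on a $\sigma$-finite measure space $(X,\mu)$ is a family $(\{f_i\}_{i=1}^\infty,\{D_i\}_{i=1}^\infty)$ together with a nonsingular transformation $F:X\to X$ such that: (1) $f_i:D_i\to R_i$ is measurable, $D_i,R_i$ are measurable subsets of $X$, and $f_i(D_i)\stackrel{\mu\text{-a.e.}}{=}R_i$ for each $i$; (2) $F\circ f_i=\mathrm{id}_{D_i}$ $\mu$-a.e. on $D_i$ for each $i$; (3) $\mu(R_i\cap R_j)=0$ for $i\neq j$; (4) $\mu(R_j\cap D_i)=0$ if $A(i,j)=0$ and $\mu(R_j\setminus D_i)=0$ if $A(i,j)=1$; (5) for each pair $U,V$ of finite subsets of $\mathbb{N}$ such that $A(U,V,j)=1$ for only finitely many $j$, $\bigcap_{u\in U}D_u\cap\bigcap_{v\in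 V}(X\setminus D_v)\stackrel{\mu\text{-a.e.}}{=}\bigcup_{j:A(U,V,j)=1}R_j$; (6) there exist the Radon-Nikodym derivatives $\Phi_{f_i}$ of $\mu\circ f_i$ with respect to $\mu$ on $D_i$ and $\Phi_{f_i^{-1}}$ of $\mu\circ f_i^{-1}$ with respect to $\mu$ on $R_i$, where $f_i^{-1}:=F|_{R_i}$. *)

theory Defs
  imports "HOL-Analysis.Analysis"
begin

definition ae_eq_set :: "'a measure \<Rightarrow> 'a set \<Rightarrow> 'a set \<Rightarrow> bool" where
  "ae_eq_set M Y Z \<longleftrightarrow> Y \<in> sets M \<and> Z \<in> sets M \<and>
     emeasure M (Y - Z) = 0 \<and> emeasure M (Z - Y) = 0"

definition AUV :: "(nat \<Rightarrow> nat \<Rightarrow> nat) \<Rightarrow> nat set \<Rightarrow> nat set \<Rightarrow> nat \<Rightarrow> nat" where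
  "AUV A U V j = (\<Prod>u\<in>U. A u j) * (\<Prod>v\<in>V. 1 - A v j)"

definition nonsingular :: "'a measure \<Rightarrow> ('a \<Rightarrow> 'a) \<Rightarrow> bool" where
  "nonsingular M F \<longleftrightarrow> F \<in> measurable M M \<and>
     (\<forall>E\<in>sets M. emeasure M E = 0 \<longrightarrow> emeasure M (F -` E \<inter> space M) = 0)"

definition has_RN_deriv_image :: "'a measure \<Rightarrow> ('a \<Rightarrow> 'a) \<Rightarrow> 'a set \<Rightarrow> bool" where
  "has_RN_deriv_image M h W \<longleftrightarrow>
     (\<exists>\<Phi>. \<Phi> \<in> borel_measurable (restrict_space M W) \<and>
        (\<forall>E. E \<in> sets M \<and> E \<subseteq> W \<longrightarrow>
             h ` E \<in> sets M \<and>
             emeasure M (h ` E) = (\<integral>\<^sup>+ x. \<Phi> x * indicator E x \<partial>M)))"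

definition A_infty_branching_system ::
  "(nat \<Rightarrow> nat \<Rightarrow> nat) \<Rightarrow> 'a measure \<Rightarrow> (nat \<Rightarrow> 'a \<Rightarrow> 'a) \<Rightarrow> (nat \<Rightarrow> 'a set)
     \<Rightarrow> (nat \<Rightarrow> 'a set) \<Rightarrow> ('a \<Rightarrow> 'a) \<Rightarrow> bool" where
  "A_infty_branching_system A M f D R F \<longleftrightarrow>
     sigma_finite_measure M \<and>
     nonsingular M F \<and>
     \<comment> \<open>(1)\<close>
     (\<forall>i. D i \<in> sets M \<and> R i \<in> sets M \<and>
          f i \<in> measurable (restrict_space M (D i)) M \<and>
          (\<forall>x\<in>D i. f i x \<in> R i) \<and>
          ae_eq_set M (f i ` D i) (R i)) \<and>
     \<comment> \<open>(2)\<close>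
     (\<forall>i. AE x in M. x \<in> D i \<longrightarrow> F (f i x) = x) \<and>
     \<comment> \<open>(3)\<close>
     (\<forall>i j. i \<noteq> j \<longrightarrow> emeasure M (R i \<inter> R j) = 0) \<and>
     \<comment> \<open>(4)\<close>
     (\<forall>i j. (A i j = 0 \<longrightarrow> emeasure M (R j \<inter> D i) = 0) \<and>
            (A i j = 1 \<longrightarrow> emeasure M (R j - D i) = 0)) \<and>
     \<comment> \<open>(5)\<close>
     (\<forall>U V. finite U \<and> finite V \<and> finite {j. AUV A U V j = 1} \<longrightarrow>
        ae_eq_set M (space M \<inter> (\<Inter>u\<in>U. D u) \<inter> (\<Inter>v\<in>V. space M - D v))
                    (\<Union>j\<in>{j. AUV A U V j = 1}. R j)) \<and>
     \<comment> \<open>(6)\<close>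
     (\<forall>i. has_RN_deriv_image M (f i) (D i) \<and> has_RN_deriv_image M F (R i))"

end

theory Submission
  imports Defs "HOL-Library.Infinite_Set"
begin

definition cell :: "nat \<Rightarrow> real set" where "cell n = {real n ..< real n + 1}"
definition cells :: "nat set \<Rightarrow> real set" where "cells S = (\<Union>n\<in>S. cell n)"
definition sh :: "(nat \<Rightarrow> nat) \<Rightarrow> real \<Rightarrow> real" where
  "sh g x = x - real (nat \<lfloor>x\<rfloor>) + real (g (nat \<lfloor>x\<rfloor>))"

abbreviation LM :: "real measure" where "LM \<equiv> restrict_space lebesgue {0::real..}"

lemma cell_floor: "x \<in> cell n \<Longrightarrow> nat \<lfloor>x\<rfloor> = n"
  unfolding cell_def by (simp add: floor_eq_iff nat_eq_iff)

lemma mem_cell: "0 \<le> x \<Longrightarrow> x \<in> cell (nat \<lfloor>x\<rfloor>)"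
  unfolding cell_def by auto

lemma cell_nonneg: "x \<in> cell n \<Longrightarrow> 0 \<le> x"
  unfolding cell_def by auto

lemma cell_disj: "x \<in> cell n \<Longrightarrow> x \<in> cell m \<Longrightarrow> n = m"
  using cell_floor by metis

lemma mem_cells: "x \<in> cells S \<longleftrightarrow> 0 \<le> x \<and> nat \<lfloor>x\<rfloor> \<in> S"
  unfolding cells_def using cell_floor mem_cell cell_nonneg by blast

lemma sh_cell: "x \<in> cell n \<Longrightarrow> sh g x = x + (real (g n) - real n)"
  unfolding sh_def using cell_floor by simp

lemma sh_cell_mem: "x \<in> cell n \<Longrightarrow> sh g x \<in> cell (g n)"
  using sh_cell[of x n g] unfolding cell_def by auto

lemma space_LM: "space LM = {0..}"
  by simp

lemma nonneg_sets: "{0::real..} \<in> sets lebesgue"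
  by simp

lemma sets_LM: "E \<in> sets LM \<longleftrightarrow> E \<subseteq> {0..} \<and> E \<in> sets lebesgue"
  by (rule sets_restrict_space_iff) simp

lemma emeasure_LM: "E \<subseteq> {0..} \<Longrightarrow> emeasure LM E = emeasure lebesgue E"
  by (rule emeasure_restrict_space) auto

lemma cell_sets: "cell n \<in> sets lebesgue"
  unfolding cell_def by simp

lemma cells_sets: "cells S \<in> sets LM"
proof -
  have "cells S = (\<Union>n. if n \<in> S then cell n else {})" unfolding cells_def by auto
  moreover have "(\<Union>n. if n \<in> S then cell n else {}) \<in> sets lebesgue"
    using cell_sets by (intro sets.countable_UN) auto
  moreover have "cells S \<subseteq> {0..}" using mem_cells by auto
  ultimately show ?thesis by (simp add: sets_LM)
qed

lemma transl:
  assumes "E \<in> sets lebesgue"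
  shows "(\<lambda>x::real. x + c) ` E \<in> sets lebesgue"
    "emeasure lebesgue ((\<lambda>x::real. x + c) ` E) = emeasure lebesgue E"
proof -
  have "(\<lambda>x. x + c) ` E = (\<lambda>x. c + x) ` E" by (simp add: add.commute)
  then show "(\<lambda>x::real. x + c) ` E \<in> sets lebesgue"
    using lebesgue_sets_translation[OF assms, of c] by simp
  show "emeasure lebesgue ((\<lambda>x::real. x + c) ` E) = emeasure lebesgue E"
    using emeasure_lebesgue_affine[of 1 c E] by simp
qed

lemma sh_vimage:
  "sh g -` E \<inter> {0..} = (\<Union>n. cell n \<inter> (\<lambda>x. x + (real n - real (g n))) ` E)"
proof (intro set_eqI iffI)
  fix x assume x: "x \<in> sh g -` E \<inter> {0..}"
  let ?n = "nat \<lfloor>x\<rfloor>"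
  have c: "x \<in> cell ?n" using x mem_cell by auto
  have "sh g x \<in> E" using x by auto
  moreover have "x = sh g x + (real ?n - real (g ?n))" using sh_cell[OF c] by simp
  ultimately show "x \<in> (\<Union>n. cell n \<inter> (\<lambda>x. x + (real n - real (g n))) ` E)"
    using c by blast
next
  fix x assume "x \<in> (\<Union>n. cell n \<inter> (\<lambda>x. x + (real n - real (g n))) ` E)"
  then obtain n y where c: "x \<in> cell n" and y: "y \<in> E" "x = y + (real n - real (g n))" by auto
  have "sh g x = y" using sh_cell[OF c] y by simp
  then show "x \<in> sh g -` E \<inter> {0..}" using y c cell_nonneg by auto
qed

lemma sh_meas: "sh g \<in> LM \<rightarrow>\<^sub>M LM"
proof (rule measurableI)
  fix x assume "x \<in> space LM"
  then have "x \<in> cell (nat \<lfloor>x\<rfloor>)" using mem_cell by auto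
  then have "sh g x \<in> cell (g (nat \<lfloor>x\<rfloor>))" by (rule sh_cell_mem)
  then show "sh g x \<in> space LM" by (auto dest: cell_nonneg)
next
  fix E assume E: "E \<in> sets LM"
  then have El: "E \<in> sets lebesgue" by (simp add: sets_LM)
  have "(\<Union>n. cell n \<inter> (\<lambda>x. x + (real n - real (g n))) ` E) \<in> sets lebesgue"
    using cell_sets transl(1)[OF El] by (intro sets.countable_UN) auto
  then show "sh g -` E \<inter> space LM \<in> sets LM"
    unfolding space_LM sh_vimage[symmetric] by (simp add: sets_LM) 
qed

lemma sh_null:
  assumes E: "E \<in> sets LM" "emeasure LM E = 0"
  shows "emeasure LM (sh g -` E \<inter> space LM) = 0"
proof -
  have El: "E \<in> sets lebesgue" "E \<subseteq> {0..}" using E by (auto simp: sets_LM)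
  then have "E \<in> null_sets lebesgue" using E emeasure_LM by (auto simp: null_sets_def)
  then have U: "(\<Union>n. (\<lambda>x. x + (real n - real (g n))) ` E) \<in> null_sets lebesgue"
    using transl[OF El(1)] by (intro null_sets_UN) (auto simp: null_sets_def)
  have m: "sh g -` E \<inter> space LM \<in> sets LM"
    using sh_meas E(1) by (rule measurable_sets)
  then have ml: "sh g -` E \<inter> space LM \<in> sets lebesgue" and sub0: "sh g -` E \<inter> space LM \<subseteq> {0..}"
    unfolding sets_LM by blast+
  have sub: "sh g -` E \<inter> space LM \<subseteq> (\<Union>n. (\<lambda>x. x + (real n - real (g n))) ` E)"
    unfolding space_LM sh_vimage by blast
  have "sh g -` E \<inter> space LM \<in> null_sets lebesgue"
    by (rule null_sets_subset[OF U ml sub])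
  then have "emeasure lebesgue (sh g -` E \<inter> space LM) = 0" by (rule null_setsD1)
  then show ?thesis using emeasure_LM[OF sub0] by simp
qed

lemma sh_image:
  assumes inj: "inj_on g S" and E: "E \<in> sets LM" "E \<subseteq> cells S"
  shows "sh g ` E \<in> sets LM \<and> emeasure LM (sh g ` E) = emeasure LM E"
proof -
  have El: "E \<in> sets lebesgue" "E \<subseteq> {0..}" using E by (auto simp: sets_LM)
  define P where "P n = E \<inter> cell n" for n
  define Q where "Q n = (\<lambda>x. x + (real (g n) - real n)) ` P n" for n
  have Pl: "P n \<in> sets lebesgue" for n using El cell_sets by (auto simp: P_def)
  have Ql: "Q n \<in> sets lebesgue" "emeasure lebesgue (Q n) = emeasure lebesgue (P n)" for n
    unfolding Q_def using transl[OF Pl] by auto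
  have PS: "n \<in> S" if "P n \<noteq> {}" for n
  proof -
    have "E \<inter> cell n \<noteq> {}" using that by (simp add: P_def)
    then obtain x where x: "x \<in> E" "x \<in> cell n" by blast
    have "nat \<lfloor>x\<rfloor> \<in> S" using E(2) x by (auto simp: mem_cells)
    with cell_floor[OF x(2)] show ?thesis by simp
  qed
  have Qc: "Q n \<subseteq> cell (g n)" for n
  proof
    fix y assume "y \<in> Q n"
    then obtain x where x: "x \<in> E" "x \<in> cell n" "y = x + (real (g n) - real n)"
      unfolding Q_def P_def by blast
    then show "y \<in> cell (g n)" using sh_cell_mem[OF x(2), of g] sh_cell[OF x(2), of g] by simp
  qed
  have dQ: "disjoint_family Q"
    unfolding disjoint_family_on_def
  proof (intro ballI impI)
    fix n m :: nat assume nm: "n \<noteq> m"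
    show "Q n \<inter> Q m = {}"
    proof (rule ccontr)
      assume "Q n \<inter> Q m \<noteq> {}"
      then obtain y where y: "y \<in> Q n" "y \<in> Q m" by auto
      then have "P n \<noteq> {}" "P m \<noteq> {}" unfolding Q_def by auto
      then have "n \<in> S" "m \<in> S" using PS by auto
      moreover have "y \<in> cell (g n)" "y \<in> cell (g m)" using y Qc by auto
      then have "g n = g m" by (rule cell_disj)
      ultimately show False using inj nm by (auto dest: inj_onD)
    qed
  qed
  have dP: "disjoint_family P"
    unfolding disjoint_family_on_def P_def by (auto dest: cell_disj)
  have EP: "E = (\<Union>n. P n)" unfolding P_def using El(2) mem_cell by auto
  have shQ: "sh g ` E = (\<Union>n. Q n)"
  proof -
    have "sh g ` P n = Q n" for n unfolding Q_def by (rule image_cong) (auto simp: P_def sh_cell)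
    then show ?thesis by (subst EP) (simp add: image_UN)
  qed
  have sub: "sh g ` E \<subseteq> {0..}"
  proof
    fix y assume "y \<in> sh g ` E"
    then obtain x where x: "x \<in> E" "y = sh g x" by blast
    then have "x \<in> cell (nat \<lfloor>x\<rfloor>)" using El(2) mem_cell by auto
    then have "y \<in> cell (g (nat \<lfloor>x\<rfloor>))" using x sh_cell_mem by simp
    then show "y \<in> {0..}" by (auto dest: cell_nonneg)
  qed
  have ml: "sh g ` E \<in> sets lebesgue" unfolding shQ using Ql by (intro sets.countable_UN) auto
  have "emeasure lebesgue (sh g ` E) = (\<Sum>n. emeasure lebesgue (Q n))"
    unfolding shQ by (rule suminf_emeasure[symmetric]) (use Ql dQ in auto)
  also have "\<dots> = (\<Sum>n. emeasure lebesgue (P n))" using Ql by simp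
  also have "\<dots> = emeasure lebesgue (\<Union>n. P n)"
    by (rule suminf_emeasure) (use Pl dP in auto)
  also have "\<dots> = emeasure lebesgue E" using EP by simp
  finally have eq: "emeasure lebesgue (sh g ` E) = emeasure lebesgue E" .
  have "sh g ` E \<in> sets LM" using ml sub by (simp add: sets_LM)
  moreover have "emeasure LM (sh g ` E) = emeasure LM E"
    using emeasure_LM[OF sub] emeasure_LM[OF El(2)] eq by simp
  ultimately show ?thesis by blast
qed

lemma sh_RN:
  assumes "inj_on g S"
  shows "has_RN_deriv_image LM (sh g) (cells S)"
  unfolding has_RN_deriv_image_def
proof (intro exI[of _ "\<lambda>_. 1"] conjI allI impI)
  fix E assume E: "E \<in> sets LM \<and> E \<subseteq> cells S"
  then show "sh g ` E \<in> sets LM" using sh_image[OF assms] by blast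
  show "emeasure LM (sh g ` E) = (\<integral>\<^sup>+ x. 1 * indicator E x \<partial>LM)"
    using sh_image[OF assms] E by simp
qed simp


lemma mem_cellsI: "x \<in> cell n \<Longrightarrow> n \<in> S \<Longrightarrow> x \<in> cells S"
  unfolding cells_def by blast

lemma cell_fin: "emeasure LM (cell n) \<noteq> \<infinity>"
proof -
  have "emeasure LM (cell n) = emeasure lebesgue (cell n)"
    by (rule emeasure_LM) (auto dest: cell_nonneg)
  also have "\<dots> = ennreal 1" unfolding cell_def by simp
  finally show ?thesis by simp
qed

lemma sigma_LM: "sigma_finite_measure LM"
  unfolding sigma_finite_measure_def
proof (intro exI[of _ "range cell"] conjI)
  show "range cell \<subseteq> sets LM"
    using cell_sets by (auto simp: sets_LM dest: cell_nonneg)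
  show "\<Union> (range cell) = space LM"
    using mem_cell by (auto dest: cell_nonneg)
  show "\<forall>a\<in>range cell. emeasure LM a \<noteq> \<infinity>" using cell_fin by auto
qed simp

lemma sh_maps:
  assumes "bij_betw g S T" "x \<in> cells S"
  shows "sh g x \<in> cells T"
proof -
  have x: "x \<in> cell (nat \<lfloor>x\<rfloor>)" "nat \<lfloor>x\<rfloor> \<in> S" using assms(2) mem_cell by (auto simp: mem_cells)
  then have "g (nat \<lfloor>x\<rfloor>) \<in> T" using assms(1) by (auto dest: bij_betwE)
  then show ?thesis using sh_cell_mem[OF x(1)] by (rule mem_cellsI[rotated])
qed

lemma sh_onto:
  assumes "bij_betw g S T"
  shows "sh g ` cells S = cells T"
proof (intro equalityI subsetI)
  fix y assume "y \<in> sh g ` cells S"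
  then show "y \<in> cells T" using sh_maps[OF assms] by blast
next
  fix y assume y: "y \<in> cells T"
  define m where "m = nat \<lfloor>y\<rfloor>"
  have ym: "y \<in> cell m" "m \<in> T" using y mem_cell by (auto simp: mem_cells m_def)
  define n where "n = inv_into S g m"
  have n: "n \<in> S" "g n = m" using ym(2) assms unfolding n_def
    by (auto simp: bij_betw_def intro: inv_into_into f_inv_into_f)
  define x where "x = y + (real n - real m)"
  have xc: "x \<in> cell n" using ym(1) unfolding x_def cell_def by auto
  have "sh g x = y" using sh_cell[OF xc] n unfolding x_def by simp
  moreover have "x \<in> cells S" by (rule mem_cellsI[OF xc n(1)])
  ultimately show "y \<in> sh g ` cells S" by blast
qed

definition cidx :: "nat \<Rightarrow> nat" where "cidx n = fst (prod_decode n)"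

lemma infinite_enc:
  assumes "\<And>m. prod_encode (j, m) \<in> S"
  shows "infinite S"
proof -
  have "inj (\<lambda>m. prod_encode (j, m))" by (rule injI) (simp add: prod_encode_eq)
  then have "infinite (range (\<lambda>m. prod_encode (j, m)))" by (rule range_inj_infinite)
  moreover have "range (\<lambda>m. prod_encode (j, m)) \<subseteq> S" using assms by auto
  ultimately show ?thesis using infinite_super by blast
qed

lemma bij_exists:
  fixes S T :: "nat set"
  assumes "infinite S" "infinite T"
  shows "\<exists>\<sigma>. bij_betw \<sigma> S T"
  using bij_betw_trans[OF bij_betw_inv_into[OF bij_enumerate[OF assms(1)]] bij_enumerate[OF assms(2)]]
  by blast

lemma AUV_iff:
  assumes "\<forall>i j. A i j \<in> {0, 1}" "finite U" "finite V"
  shows "AUV A U V j = 1 \<longleftrightarrow> (\<forall>u\<in>U. A u j = 1) \<and> (\<forall>v\<in>V. A v j = 0)"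
proof -
  have "((1::nat) - A v j = 1) \<longleftrightarrow> A v j = 0" for v using assms(1) by (metis diff_zero insertE singletonD zero_neq_one diff_self_eq_0)
  moreover have "AUV A U V j = 1 \<longleftrightarrow> (\<Prod>u\<in>U. A u j) = 1 \<and> (\<Prod>v\<in>V. 1 - A v j) = 1"
    unfolding AUV_def by (rule nat_mult_eq_1_iff)
  moreover note prod_eq_1_iff[OF assms(2), of "\<lambda>u. A u j"] prod_eq_1_iff[OF assms(3), of "\<lambda>v. 1 - A v j"]
  ultimately show ?thesis by auto
qed

theorem mainTheorem4:
  fixes A :: "nat \<Rightarrow> nat \<Rightarrow> nat"
  assumes "\<forall>i j. A i j \<in> {0, 1}"
    and "\<forall>i. \<exists>j. A i j = 1"
  shows "\<exists>f D R F. A_infty_branching_system A (restrict_space lebesgue {0::real..}) f D R F"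
proof -
  define C where "C i = {n. cidx n = i}" for i
  define Ei where "Ei i = {n. A i (cidx n) = 1}" for i
  have "\<forall>i. \<exists>\<sigma>. bij_betw \<sigma> (Ei i) (C i)"
  proof
    fix i
    obtain j where j: "A i j = 1" using assms(2) by blast
    have "infinite (Ei i)" unfolding Ei_def by (rule infinite_enc[of j]) (simp add: cidx_def j)
    moreover have "infinite (C i)" unfolding C_def by (rule infinite_enc[of i]) (simp add: cidx_def)
    ultimately show "\<exists>\<sigma>. bij_betw \<sigma> (Ei i) (C i)" by (rule bij_exists)
  qed
  then obtain \<sigma> where \<sigma>: "\<And>i. bij_betw (\<sigma> i) (Ei i) (C i)" by metis
  define \<tau> where "\<tau> n = inv_into (Ei (cidx n)) (\<sigma> (cidx n)) n" for n
  define f where "f i = sh (\<sigma> i)" for i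
  define D where "D i = cells (Ei i)" for i
  define R where "R i = cells (C i)" for i
  define F where "F = sh \<tau>"
  have injs: "inj_on (\<sigma> i) (Ei i)" for i using \<sigma> by (auto simp: bij_betw_def)
  have injt: "inj_on \<tau> (C i)" for i
  proof -
    have "inj_on (inv_into (Ei i) (\<sigma> i)) (C i)"
      by (rule inj_on_inv_into) (use \<sigma>[of i] in \<open>auto simp: bij_betw_def\<close>)
    moreover have "\<And>n. n \<in> C i \<Longrightarrow> \<tau> n = inv_into (Ei i) (\<sigma> i) n"
      by (simp add: \<tau>_def C_def)
    then have "inj_on \<tau> (C i) = inj_on (inv_into (Ei i) (\<sigma> i)) (C i)" by (rule inj_on_cong)
    ultimately show ?thesis by simp
  qed
  have memD: "x \<in> D i \<longleftrightarrow> 0 \<le> x \<and> A i (cidx (nat \<lfloor>x\<rfloor>)) = 1" for x i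
    by (simp add: D_def Ei_def mem_cells)
  have memR: "x \<in> R i \<longleftrightarrow> 0 \<le> x \<and> cidx (nat \<lfloor>x\<rfloor>) = i" for x i
    by (simp add: R_def C_def mem_cells)
  have c1: "\<forall>i. D i \<in> sets LM \<and> R i \<in> sets LM \<and>
          f i \<in> measurable (restrict_space LM (D i)) LM \<and>
          (\<forall>x\<in>D i. f i x \<in> R i) \<and> ae_eq_set LM (f i ` D i) (R i)"
  proof
    fix i
    have im: "f i ` D i = R i" unfolding f_def D_def R_def by (rule sh_onto[OF \<sigma>])
    have Dm: "D i \<in> sets LM" "R i \<in> sets LM" unfolding D_def R_def by (rule cells_sets)+
    have fm: "f i \<in> measurable (restrict_space LM (D i)) LM"
      unfolding f_def by (rule measurable_restrict_space1[OF sh_meas])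
    have mp: "\<forall>x\<in>D i. f i x \<in> R i" unfolding f_def D_def R_def using sh_maps[OF \<sigma>] by blast
    have ae: "ae_eq_set LM (f i ` D i) (R i)" unfolding ae_eq_set_def im using Dm by simp
    show "D i \<in> sets LM \<and> R i \<in> sets LM \<and>
          f i \<in> measurable (restrict_space LM (D i)) LM \<and>
          (\<forall>x\<in>D i. f i x \<in> R i) \<and> ae_eq_set LM (f i ` D i) (R i)"
      using Dm fm mp ae by blast
  qed
  have c2: "\<forall>i. AE x in LM. x \<in> D i \<longrightarrow> F (f i x) = x"
  proof (intro allI AE_I2 impI)
    fix i x assume x: "x \<in> D i"
    define n where "n = nat \<lfloor>x\<rfloor>"
    have xn: "x \<in> cell n" "n \<in> Ei i" using x mem_cell by (auto simp: D_def mem_cells n_def)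
    have fx: "f i x = x + (real (\<sigma> i n) - real n)" "f i x \<in> cell (\<sigma> i n)"
      unfolding f_def using sh_cell[OF xn(1)] sh_cell_mem[OF xn(1)] by auto
    have "\<sigma> i n \<in> C i" using \<sigma>[of i] xn(2) by (auto dest: bij_betwE)
    then have "\<tau> (\<sigma> i n) = n"
      unfolding \<tau>_def using injs xn(2) by (simp add: C_def inv_into_f_f)
    then show "F (f i x) = x" unfolding F_def using sh_cell[OF fx(2), of \<tau>] fx(1) by simp
  qed
  have c3: "\<forall>i j. i \<noteq> j \<longrightarrow> emeasure LM (R i \<inter> R j) = 0"
  proof (intro allI impI)
    fix i j :: nat assume "i \<noteq> j"
    then have "R i \<inter> R j = {}" by (auto simp: memR)
    then show "emeasure LM (R i \<inter> R j) = 0" by simp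
  qed
  have c4: "\<forall>i j. (A i j = 0 \<longrightarrow> emeasure LM (R j \<inter> D i) = 0) \<and>
            (A i j = 1 \<longrightarrow> emeasure LM (R j - D i) = 0)"
  proof (intro allI conjI impI)
    fix i j assume "A i j = 0"
    then have "R j \<inter> D i = {}" by (auto simp: memR memD)
    then show "emeasure LM (R j \<inter> D i) = 0" by simp
  next
    fix i j assume "A i j = 1"
    then have "R j - D i = {}" by (auto simp: memR memD)
    then show "emeasure LM (R j - D i) = 0" by (metis emeasure_empty)
  qed
  have c5: "\<forall>U V. finite U \<and> finite V \<and> finite {j. AUV A U V j = 1} \<longrightarrow>
        ae_eq_set LM (space LM \<inter> (\<Inter>u\<in>U. D u) \<inter> (\<Inter>v\<in>V. space LM - D v))
                    (\<Union>j\<in>{j. AUV A U V j = 1}. R j)"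
  proof (intro allI impI)
    fix U V assume UV: "finite U \<and> finite V \<and> finite {j. AUV A U V j = 1}"
    let ?S = "cells {n. AUV A U V (cidx n) = 1}"
    have zo: "A v j \<noteq> 1 \<longleftrightarrow> A v j = 0" for v j using assms(1) by auto
    have L: "space LM \<inter> (\<Inter>u\<in>U. D u) \<inter> (\<Inter>v\<in>V. space LM - D v) = ?S"
    proof (rule set_eqI)
      fix x :: real
      let ?c = "cidx (nat \<lfloor>x\<rfloor>)"
      have "x \<in> space LM \<inter> (\<Inter>u\<in>U. D u) \<inter> (\<Inter>v\<in>V. space LM - D v) \<longleftrightarrow>
            0 \<le> x \<and> (\<forall>u\<in>U. A u ?c = 1) \<and> (\<forall>v\<in>V. A v ?c \<noteq> 1)"
        by (auto simp: memD)
      also have "\<dots> \<longleftrightarrow> 0 \<le> x \<and> AUV A U V ?c = 1"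
        using AUV_iff[OF assms(1), of U V ?c] UV zo by blast
      also have "\<dots> \<longleftrightarrow> x \<in> ?S" by (simp add: mem_cells)
      finally show "x \<in> space LM \<inter> (\<Inter>u\<in>U. D u) \<inter> (\<Inter>v\<in>V. space LM - D v) \<longleftrightarrow> x \<in> ?S" .
    qed
    have Rr: "(\<Union>j\<in>{j. AUV A U V j = 1}. R j) = ?S"
      by (auto simp: memR mem_cells)
    show "ae_eq_set LM (space LM \<inter> (\<Inter>u\<in>U. D u) \<inter> (\<Inter>v\<in>V. space LM - D v))
                    (\<Union>j\<in>{j. AUV A U V j = 1}. R j)"
      unfolding L Rr ae_eq_set_def using cells_sets by simp
  qed
  have c6: "\<forall>i. has_RN_deriv_image LM (f i) (D i) \<and> has_RN_deriv_image LM F (R i)"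
    unfolding f_def D_def F_def R_def using sh_RN injs injt by blast
  have c0: "nonsingular LM F"
    unfolding nonsingular_def F_def using sh_meas sh_null by blast
  have "A_infty_branching_system A LM f D R F"
    unfolding A_infty_branching_system_def by (intro conjI sigma_LM c0 c1 c2 c3 c4 c5 c6)
  then show ?thesis by blast
qed

end
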